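(* Let $\Gamma$ be a semigroup of $C^1$ diffeomorphisms of a compact manifold $M$. The action of $\Gamma$ on $M$ is expanding if and only if there exist $h_1,\dots,h_k\in\Gamma$, open balls $B_1,\dots,B_k$ in $M$ and a constant $\kappa>1$ such that $M=B_1\cup\dots\cup B_k$ and $m(Dh_i^{-1}(x))>\kappa$ for all $x\in B_i$ and all $i=1,\dots,k$.
   Context: For a linear map $T$, $m(T)=\|T^{-1}\|^{-1}$. The action of $\Gamma$ is expanding if for every $z\in M$ there is $g\in\Gamma$ with $m(Dg^{-1}(z))>1$. *)

theory Defs
  imports "HOL-Analysis.Analysis"
begin

text \<open>Compact manifolds are modelled as compact embedded C1 submanifolds of a
Euclidean space (Whitney embedding), with the Riemannian metric induced by the
ambient inner product.\<close>

definition C1_on :: "'a::euclidean_space set \<Rightarrow> ('a \<Rightarrow> 'b::euclidean_space) \<Rightarrow> bool" where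
  "C1_on U f \<longleftrightarrow> (\<exists>f' :: 'a \<Rightarrow> ('a \<Rightarrow>\<^sub>L 'b).
      (\<forall>x\<in>U. (f has_derivative blinfun_apply (f' x)) (at x)) \<and> continuous_on U f')"

definition C1_submanifold :: "nat \<Rightarrow> 'a::euclidean_space set \<Rightarrow> bool" where
  "C1_submanifold d M \<longleftrightarrow> (\<exists>S. subspace S \<and> dim S = d \<and>
     (\<forall>x\<in>M. \<exists>U V (\<phi>::'a\<Rightarrow>'a) \<psi>. open U \<and> x \<in> U \<and> open V \<and> \<phi> ` U = V \<and>
        (\<forall>y\<in>U. \<psi> (\<phi> y) = y) \<and> (\<forall>z\<in>V. \<phi> (\<psi> z) = z) \<and>
        C1_on U \<phi> \<and> C1_on V \<psi> \<and> \<phi> ` (M \<inter> U) = V \<inter> S))"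

definition C1_map :: "'a::euclidean_space set \<Rightarrow> ('a \<Rightarrow> 'a) \<Rightarrow> bool" where
  "C1_map M g \<longleftrightarrow> g ` M \<subseteq> M \<and>
     (\<forall>x\<in>M. \<exists>U G. open U \<and> x \<in> U \<and> C1_on U G \<and> (\<forall>y\<in>M \<inter> U. G y = g y))"

definition C1_diffeo :: "'a::euclidean_space set \<Rightarrow> ('a \<Rightarrow> 'a) \<Rightarrow> bool" where
  "C1_diffeo M g \<longleftrightarrow> bij_betw g M M \<and> C1_map M g \<and> C1_map M (inv_into M g)"

text \<open>C1 curves in M through x; their velocities at 0 are the tangent vectors at x.\<close>
definition curve_through :: "'a::euclidean_space set \<Rightarrow> 'a \<Rightarrow> (real \<Rightarrow> 'a) \<Rightarrow> bool" where
  "curve_through M x \<gamma> \<longleftrightarrow> \<gamma> C1_differentiable_on UNIV \<and> range \<gamma> \<subseteq> M \<and> \<gamma> 0 = x"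

text \<open>m(Dg(x)) = inf over unit tangent vectors v at x of |Dg(x) v|
 (equal to the norm of the inverse to the power -1 for an invertible map),
 where Dg(x) v is the velocity of g o gamma at 0.\<close>
definition conorm :: "'a::euclidean_space set \<Rightarrow> ('a \<Rightarrow> 'a) \<Rightarrow> 'a \<Rightarrow> real" where
  "conorm M g x = Inf {norm (vector_derivative (g \<circ> \<gamma>) (at 0)) | \<gamma>.
      curve_through M x \<gamma> \<and> norm (vector_derivative \<gamma> (at 0)) = 1}"

definition semigroup_of_C1_diffeos :: "'a::euclidean_space set \<Rightarrow> ('a \<Rightarrow> 'a) set \<Rightarrow> bool" where
  "semigroup_of_C1_diffeos M \<Gamma> \<longleftrightarrow> (\<forall>g\<in>\<Gamma>. C1_diffeo M g) \<and> (\<forall>g\<in>\<Gamma>. \<forall>h\<in>\<Gamma>. g \<circ> h \<in> \<Gamma>)"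

definition expanding :: "'a::euclidean_space set \<Rightarrow> ('a \<Rightarrow> 'a) set \<Rightarrow> bool" where
  "expanding M \<Gamma> \<longleftrightarrow> (\<forall>z\<in>M. \<exists>g\<in>\<Gamma>. conorm M (inv_into M g) z > 1)"

end

theory Submission
  imports Defs
begin


lemma vd_in_subspace:
  fixes f :: "real \<Rightarrow> 'a::euclidean_space"
  assumes d: "(f has_vector_derivative f') (at 0)" and S: "subspace S"
    and ev: "eventually (\<lambda>t. f t \<in> S) (at 0)" and f0: "f 0 \<in> S"
  shows "f' \<in> S"
proof -
  have "((\<lambda>y. ((f y - f 0) - (y - 0) *\<^sub>R f') /\<^sub>R norm (y - 0)) \<longlongrightarrow> 0) (at 0)"
    using d unfolding has_vector_derivative_def has_derivative_at_within by blast
  note tendsto_norm_zero[OF this]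
  hence "((\<lambda>y. norm (((f y - f 0) - y *\<^sub>R f') /\<^sub>R norm y)) \<longlongrightarrow> 0) (at 0)"
    by simp
  moreover have "eventually (\<lambda>y. norm (((f y - f 0) - y *\<^sub>R f') /\<^sub>R norm y)
      = norm ((f y - f 0) /\<^sub>R y - f')) (at (0::real))"
  proof -
    have "eventually (\<lambda>y::real. y \<noteq> 0) (at 0)" by (simp add: eventually_at_filter)
    thus ?thesis
    proof eventually_elim
      case (elim y)
      have "(f y - f 0) /\<^sub>R y - f' = (inverse y) *\<^sub>R ((f y - f 0) - y *\<^sub>R f')"
        using elim by (simp add: algebra_simps)
      thus ?case by simp
    qed
  qed
  ultimately have "((\<lambda>y. norm ((f y - f 0) /\<^sub>R y - f')) \<longlongrightarrow> 0) (at 0)"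
    using Lim_transform_eventually by fastforce
  hence "((\<lambda>y. (f y - f 0) /\<^sub>R y - f') \<longlongrightarrow> 0) (at 0)"
    by (rule tendsto_norm_zero_cancel)
  hence lim: "((\<lambda>y. (f y - f 0) /\<^sub>R y) \<longlongrightarrow> f') (at 0)"
    by (rule LIM_zero_cancel)
  have "eventually (\<lambda>y. (f y - f 0) /\<^sub>R y \<in> S) (at 0)"
    using ev by eventually_elim (simp add: S f0 subspace_diff subspace_scale)
  thus ?thesis
    using Lim_in_closed_set[OF closed_subspace[OF S] _ _ lim] by simp
qed



lemma p_deriv:
  fixes w a :: "'a::euclidean_space"
  assumes "\<epsilon> > 0"
  shows "((\<lambda>t. a + (\<epsilon> * sin (t/\<epsilon>)) *\<^sub>R w) has_vector_derivative cos (t/\<epsilon>) *\<^sub>R w) (at t)"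
proof -
  have "((\<lambda>t. \<epsilon> * sin (t/\<epsilon>)) has_real_derivative cos (t/\<epsilon>)) (at t)"
    using assms by (auto intro!: derivative_eq_intros)
  hence "((\<lambda>t. (\<epsilon> * sin (t/\<epsilon>)) *\<^sub>R w) has_vector_derivative cos (t/\<epsilon>) *\<^sub>R w) (at t)"
    using has_vector_derivative_scaleR[OF _ has_vector_derivative_const[of w]] by fastforce
  thus ?thesis
    using has_vector_derivative_add[OF has_vector_derivative_const[of a]] by fastforce
qed

lemma chart_inv_deriv:
  fixes \<phi> \<psi> :: "'a::euclidean_space \<Rightarrow> 'a"
  assumes "open U" "y \<in> U" "\<forall>y\<in>U. \<psi> (\<phi> y) = y"
    and "(\<phi> has_derivative blinfun_apply \<phi>') (at y)"
    and "(\<psi> has_derivative blinfun_apply \<psi>') (at (\<phi> y))"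
  shows "blinfun_apply \<psi>' (blinfun_apply \<phi>' v) = v"
proof -
  have "(\<psi> \<circ> \<phi> has_derivative blinfun_apply \<psi>' \<circ> blinfun_apply \<phi>') (at y)"
    using assms(4,5) by (rule diff_chain_at)
  moreover have "(\<psi> \<circ> \<phi> has_derivative id) (at y)"
    by (rule has_derivative_transform_within_open[OF has_derivative_id assms(1,2)])
       (use assms(3) in auto)
  ultimately have "blinfun_apply \<psi>' \<circ> blinfun_apply \<phi>' = id"
    by (rule has_derivative_unique)
  thus ?thesis by (metis comp_apply id_apply)
qed



lemma make_curve:
  fixes \<phi> \<psi> :: "'a::euclidean_space \<Rightarrow> 'a"
  assumes "open V" "\<phi> ` U = V" "\<forall>y\<in>U. \<psi> (\<phi> y) = y"
   and dpsi: "\<forall>z\<in>V. (\<psi> has_derivative blinfun_apply (\<psi>' z)) (at z)" and cpsi: "continuous_on V \<psi>'"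
   and MU: "\<phi> ` (M \<inter> U) = V \<inter> S" and S: "subspace S" and x: "x \<in> M" "x \<in> U" and w: "w \<in> S"
  shows "\<exists>\<gamma>. curve_through M x \<gamma> \<and> vector_derivative \<gamma> (at 0) = blinfun_apply (\<psi>' (\<phi> x)) w"
proof -
  have phx: "\<phi> x \<in> V" using assms x by auto
  obtain e where e: "e > 0" "ball (\<phi> x) e \<subseteq> V" using open_contains_ball phx assms(1) by blast
  define \<epsilon> where "\<epsilon> = e / (2 * (norm w + 1))"
  have nw: "norm w + 1 > 0" using norm_ge_zero[of w] by linarith
  have \<epsilon>: "\<epsilon> > 0" using e nw unfolding \<epsilon>_def by simp
  define p where "p = (\<lambda>t. \<phi> x + (\<epsilon> * sin (t/\<epsilon>)) *\<^sub>R w)"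
  have pV: "p t \<in> V" for t
  proof -
    have "norm ((\<epsilon> * sin (t/\<epsilon>)) *\<^sub>R w) = \<epsilon> * \<bar>sin (t/\<epsilon>)\<bar> * norm w"
      using \<epsilon> by (simp add: abs_mult)
    also have "\<dots> \<le> \<epsilon> * norm w"
      using \<epsilon> abs_sin_le_one[of "t/\<epsilon>"] mult_left_mono[OF mult_left_le_one_le[OF norm_ge_zero[of w] abs_ge_zero abs_sin_le_one[of "t/\<epsilon>"]], of \<epsilon>]
      by (simp add: mult.assoc)
    also have "\<dots> < e"
    proof -
      have "\<epsilon> * norm w = e * (norm w / (2 * (norm w + 1)))" by (simp add: \<epsilon>_def)
      moreover have "norm w / (2 * (norm w + 1)) < 1"
        using nw by (simp add: divide_less_eq)
      ultimately show ?thesis using e mult_strict_left_mono[of "norm w / (2 * (norm w + 1))" 1 e]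
        by linarith
    qed
    finally show ?thesis using e(2) by (auto simp: p_def dist_norm)
  qed
  have pS: "p t \<in> S" for t
  proof -
    have "\<phi> x \<in> V \<inter> S" using MU x by blast
    thus ?thesis using S w by (simp add: p_def subspace_add subspace_scale)
  qed
  define D where "D = (\<lambda>t. blinfun_apply (\<psi>' (p t)) (cos (t/\<epsilon>) *\<^sub>R w))"
  have dp: "(p has_vector_derivative cos (t/\<epsilon>) *\<^sub>R w) (at t)" for t
    unfolding p_def by (rule p_deriv[OF \<epsilon>])
  have dg: "((\<psi> \<circ> p) has_vector_derivative D t) (at t)" for t
  proof -
    have "(\<psi> has_derivative blinfun_apply (\<psi>' (p t))) (at (p t) within p ` UNIV)"
      using dpsi pV has_derivative_subset by blast
    thus ?thesis unfolding D_def using vector_derivative_diff_chain_within[OF dp] by blast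
  qed
  have cp: "continuous_on UNIV p"
    unfolding p_def by (intro continuous_intros) (use \<epsilon> in auto)
  have "continuous_on UNIV (\<lambda>t. \<psi>' (p t))"
    by (rule continuous_on_compose2[OF cpsi cp]) (use pV in auto)
  hence cD: "continuous_on UNIV D"
    unfolding D_def by (intro continuous_intros) (use \<epsilon> in auto)
  have C1: "(\<psi> \<circ> p) C1_differentiable_on UNIV"
    unfolding C1_differentiable_on_def using dg cD by blast
  have rng: "range (\<psi> \<circ> p) \<subseteq> M"
  proof
    fix y assume "y \<in> range (\<psi> \<circ> p)"
    then obtain t where t: "y = \<psi> (p t)" by auto
    have "p t \<in> \<phi> ` (M \<inter> U)" using MU pV pS by blast
    then obtain u where "u \<in> M \<inter> U" "p t = \<phi> u" by auto
    thus "y \<in> M" using t assms(3) by auto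
  qed
  have g0: "(\<psi> \<circ> p) 0 = x" using assms(3) x by (simp add: p_def)
  have "vector_derivative (\<psi> \<circ> p) (at 0) = D 0"
    by (rule vector_derivative_at[OF dg])
  also have "D 0 = blinfun_apply (\<psi>' (\<phi> x)) w" by (simp add: D_def p_def)
  finally show ?thesis
    using C1 rng g0 unfolding curve_through_def by blast
qed



lemma curve_vd:
  assumes "curve_through M x \<gamma>"
  shows "(\<gamma> has_vector_derivative vector_derivative \<gamma> (at 0)) (at 0)"
    and "continuous_on UNIV \<gamma>"
proof -
  have C: "\<gamma> C1_differentiable_on UNIV" using assms by (simp add: curve_through_def)
  then obtain D where "\<forall>t. (\<gamma> has_vector_derivative D t) (at t)"
    unfolding C1_differentiable_on_def by blast
  thus "(\<gamma> has_vector_derivative vector_derivative \<gamma> (at 0)) (at 0)"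
    using vector_derivative_at by metis
  show "continuous_on UNIV \<gamma>" using C1_differentiable_imp_continuous_on[OF C] .
qed

lemma comp_velocity:
  assumes c: "curve_through M x \<gamma>" and W: "open W" "x \<in> W"
    and G: "(G has_derivative blinfun_apply G') (at x)" and eq: "\<forall>y\<in>M\<inter>W. G y = g y"
  shows "vector_derivative (g \<circ> \<gamma>) (at 0) = blinfun_apply G' (vector_derivative \<gamma> (at 0))"
proof -
  note vd = curve_vd[OF c]
  have g0: "\<gamma> 0 = x" and rM: "range \<gamma> \<subseteq> M" using c by (auto simp: curve_through_def)
  have "(G has_derivative blinfun_apply G') (at (\<gamma> 0) within range \<gamma>)"
    using G g0 has_derivative_subset by blast
  hence d: "((G \<circ> \<gamma>) has_vector_derivative blinfun_apply G' (vector_derivative \<gamma> (at 0))) (at 0)"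
    using vector_derivative_diff_chain_within[OF vd(1)] by blast
  have "((g \<circ> \<gamma>) has_vector_derivative blinfun_apply G' (vector_derivative \<gamma> (at 0))) (at 0)"
  proof (rule has_vector_derivative_transform_within_open[OF d])
    show "open (\<gamma> -` W)" using open_vimage[OF W(1) vd(2)] .
    show "0 \<in> \<gamma> -` W" using g0 W by simp
    fix y assume "y \<in> \<gamma> -` W"
    thus "(G \<circ> \<gamma>) y = (g \<circ> \<gamma>) y" using eq rM by auto
  qed
  thus ?thesis by (rule vector_derivative_at)
qed

lemma velocity_in_S:
  fixes \<phi> :: "'a::euclidean_space \<Rightarrow> 'a" and \<gamma> :: "real \<Rightarrow> 'a"
  assumes c: "curve_through M x \<gamma>" and U: "open U" "x \<in> U"
    and P: "(\<phi> has_derivative blinfun_apply P) (at x)" and MU: "\<phi> ` (M \<inter> U) \<subseteq> S" and S: "subspace S"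
  shows "blinfun_apply P (vector_derivative \<gamma> (at 0)) \<in> S"
proof -
  note vd = curve_vd[OF c]
  have g0: "\<gamma> 0 = x" and rM: "range \<gamma> \<subseteq> M" using c by (auto simp: curve_through_def)
  have "(\<phi> has_derivative blinfun_apply P) (at (\<gamma> 0) within range \<gamma>)"
    using P g0 has_derivative_subset by blast
  hence d: "((\<phi> \<circ> \<gamma>) has_vector_derivative blinfun_apply P (vector_derivative \<gamma> (at 0))) (at 0)"
    using vector_derivative_diff_chain_within[OF vd(1)] by blast
  have o: "open (\<gamma> -` U)" using open_vimage[OF U(1) vd(2)] .
  have "eventually (\<lambda>t. t \<in> \<gamma> -` U) (at 0)"
    by (rule eventually_at_in_open'[OF o]) (use g0 U in simp)
  hence "eventually (\<lambda>t. (\<phi> \<circ> \<gamma>) t \<in> S) (at 0)"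
    by eventually_elim (use rM MU in auto)
  moreover have "(\<phi> \<circ> \<gamma>) 0 \<in> S"
  proof -
    have "\<gamma> 0 \<in> M \<inter> U" using g0 U rM by auto
    thus ?thesis using MU by auto
  qed
  ultimately show ?thesis using vd_in_subspace[OF d S] by blast
qed

lemma curve_exists:
  assumes sub: "C1_submanifold d M" and d: "d \<ge> 1" and x: "x \<in> M"
  shows "\<exists>\<gamma>. curve_through M x \<gamma> \<and> norm (vector_derivative \<gamma> (at 0)) = 1"
proof -
  obtain S where S: "subspace S" "dim S = d" and ch: "\<forall>x\<in>M. \<exists>U V (\<phi>::'a\<Rightarrow>'a) \<psi>. open U \<and> x \<in> U \<and> open V \<and> \<phi> ` U = V \<and>
        (\<forall>y\<in>U. \<psi> (\<phi> y) = y) \<and> (\<forall>z\<in>V. \<phi> (\<psi> z) = z) \<and>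
        C1_on U \<phi> \<and> C1_on V \<psi> \<and> \<phi> ` (M \<inter> U) = V \<inter> S"
    using sub unfolding C1_submanifold_def by blast
  obtain U V \<phi> \<psi> where ch: "open U" "x \<in> U" "open V" "\<phi> ` U = V"
        "\<forall>y\<in>U. \<psi> (\<phi> y) = y" "\<forall>z\<in>V. \<phi> (\<psi> z) = z"
        "C1_on U \<phi>" "C1_on V \<psi>" "\<phi> ` (M \<inter> U) = V \<inter> S"
    using ch x by metis
  obtain \<phi>' where \<phi>': "\<forall>x\<in>U. (\<phi> has_derivative blinfun_apply (\<phi>' x)) (at x)"
    using ch(7) unfolding C1_on_def by blast
  obtain \<psi>' where \<psi>': "\<forall>x\<in>V. (\<psi> has_derivative blinfun_apply (\<psi>' x)) (at x)" "continuous_on V \<psi>'"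
    using ch(8) unfolding C1_on_def by blast
  have "\<not> S \<subseteq> {0}" using S d dim_eq_0[of S] by auto
  then obtain w where w: "w \<in> S" "w \<noteq> 0" by blast
  have phx: "\<phi> x \<in> V" using ch by auto
  have psx: "\<psi> (\<phi> x) = x" using ch by auto
  define u where "u = blinfun_apply (\<psi>' (\<phi> x)) w"
  have "blinfun_apply (\<phi>' (\<psi> (\<phi> x))) u = w"
    unfolding u_def
    by (rule chart_inv_deriv[of V "\<phi> x" \<phi> \<psi>]) (use ch phx \<psi>' \<phi>' psx in auto)
  hence u0: "u \<noteq> 0" using w by auto
  obtain \<gamma> where \<gamma>: "curve_through M x \<gamma>"
      "vector_derivative \<gamma> (at 0) = blinfun_apply (\<psi>' (\<phi> x)) ((1 / norm u) *\<^sub>R w)"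
    using make_curve[of V \<phi> U \<psi> \<psi>' M S x "(1 / norm u) *\<^sub>R w"] ch \<psi>' S x w
    by (auto simp: subspace_scale)
  have "vector_derivative \<gamma> (at 0) = (1 / norm u) *\<^sub>R u"
    using \<gamma>(2) by (simp add: u_def blinfun.scaleR_right)
  thus ?thesis using \<gamma>(1) u0 by auto
qed



lemma conorm_facts:
  assumes "C1_submanifold d M" "d \<ge> 1" "x \<in> M"
  shows "{norm (vector_derivative (g \<circ> \<gamma>) (at 0)) | \<gamma>.
      curve_through M x \<gamma> \<and> norm (vector_derivative \<gamma> (at 0)) = 1} \<noteq> {}"
   and "bdd_below {norm (vector_derivative (g \<circ> \<gamma>) (at 0)) | \<gamma>.
      curve_through M x \<gamma> \<and> norm (vector_derivative \<gamma> (at 0)) = 1}"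
  using curve_exists[OF assms] apply blast
  by (rule bdd_belowI[of _ 0]) auto

lemma conorm_lsc:
  fixes M :: "'a::euclidean_space set"
  assumes sub: "C1_submanifold d M" and d: "d \<ge> 1" and g: "C1_map M g" and z: "z \<in> M"
    and c: "c < conorm M g z"
  shows "\<exists>r>0. \<forall>x\<in>M \<inter> ball z r. conorm M g x > c"
proof (rule ccontr)
  assume neg: "\<not> ?thesis"
  obtain S where S: "subspace S" "dim S = d" and ch: "\<forall>x\<in>M. \<exists>U V (\<phi>::'a\<Rightarrow>'a) \<psi>. open U \<and> x \<in> U \<and> open V \<and> \<phi> ` U = V \<and>
        (\<forall>y\<in>U. \<psi> (\<phi> y) = y) \<and> (\<forall>z\<in>V. \<phi> (\<psi> z) = z) \<and>
        C1_on U \<phi> \<and> C1_on V \<psi> \<and> \<phi> ` (M \<inter> U) = V \<inter> S"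
    using sub unfolding C1_submanifold_def by blast
  obtain U V \<phi> \<psi> where ch: "open U" "z \<in> U" "open V" "\<phi> ` U = V"
        "\<forall>y\<in>U. \<psi> (\<phi> y) = y" "\<forall>z\<in>V. \<phi> (\<psi> z) = z"
        "C1_on U \<phi>" "C1_on V \<psi>" "\<phi> ` (M \<inter> U) = V \<inter> S"
    using ch z by metis
  obtain \<phi>' where \<phi>': "\<forall>x\<in>U. (\<phi> has_derivative blinfun_apply (\<phi>' x)) (at x)" "continuous_on U \<phi>'"
    using ch(7) unfolding C1_on_def by blast
  obtain \<psi>' where \<psi>': "\<forall>x\<in>V. (\<psi> has_derivative blinfun_apply (\<psi>' x)) (at x)" "continuous_on V \<psi>'"
    using ch(8) unfolding C1_on_def by blast
  obtain W G where W: "open W" "z \<in> W" "C1_on W G" "\<forall>y\<in>M \<inter> W. G y = g y"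
    using g z unfolding C1_map_def by blast
  obtain G' where G': "\<forall>x\<in>W. (G has_derivative blinfun_apply (G' x)) (at x)" "continuous_on W G'"
    using W(3) unfolding C1_on_def by blast
  obtain r0 where r0: "r0 > 0" "ball z r0 \<subseteq> U \<inter> W"
    using open_contains_ball[of "U \<inter> W"] ch(1,2) W(1,2) by (meson open_Int IntI)
  define Q where "Q = (\<lambda>x. {norm (vector_derivative (g \<circ> \<gamma>) (at 0)) | \<gamma>.
      curve_through M x \<gamma> \<and> norm (vector_derivative \<gamma> (at 0)) = 1})"
  have cQ: "conorm M g x = Inf (Q x)" for x unfolding Q_def conorm_def by simp
  define c1 where "c1 = (c + conorm M g z) / 2"
  have c1: "c < c1" "c1 < conorm M g z" using c by (auto simp: c1_def)
  have "\<forall>n. \<exists>x. x \<in> M \<inter> ball z (min r0 (1 / (real n + 1))) \<and> conorm M g x \<le> c"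
  proof
    fix n
    have "min r0 (1 / (real n + 1)) > 0" using r0 by simp
    thus "\<exists>x. x \<in> M \<inter> ball z (min r0 (1 / (real n + 1))) \<and> conorm M g x \<le> c"
      using neg by (meson not_less)
  qed
  then obtain x where x: "\<And>n. x n \<in> M" "\<And>n. dist z (x n) < r0" "\<And>n. dist z (x n) < 1 / (real n + 1)"
      "\<And>n. conorm M g (x n) \<le> c"
    by (simp add: choice_iff) blast
  have xUW: "x n \<in> U" "x n \<in> W" for n using x(2)[of n] r0 by auto
  have "\<forall>n. \<exists>\<gamma>. curve_through M (x n) \<gamma> \<and> norm (vector_derivative \<gamma> (at 0)) = 1 \<and>
          norm (vector_derivative (g \<circ> \<gamma>) (at 0)) < c1"
  proof
    fix n
    have "Inf (Q (x n)) < c1" using x(4)[of n] c1 cQ by simp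
    moreover have ne: "Q (x n) \<noteq> {}" unfolding Q_def by (rule conorm_facts(1)[OF sub d x(1)])
    ultimately obtain q where "q \<in> Q (x n)" "q < c1"
      using cInf_lessD[OF ne] by blast
    thus "\<exists>\<gamma>. curve_through M (x n) \<gamma> \<and> norm (vector_derivative \<gamma> (at 0)) = 1 \<and>
          norm (vector_derivative (g \<circ> \<gamma>) (at 0)) < c1" unfolding Q_def by blast
  qed
  then obtain \<gamma> where \<gamma>: "\<And>n. curve_through M (x n) (\<gamma> n)"
      "\<And>n. norm (vector_derivative (\<gamma> n) (at 0)) = 1"
      "\<And>n. norm (vector_derivative (g \<circ> \<gamma> n) (at 0)) < c1"
    by (simp add: choice_iff) blast
  define v where "v = (\<lambda>n. vector_derivative (\<gamma> n) (at 0))"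
  have vs: "\<forall>n. v n \<in> sphere 0 1" using \<gamma>(2) by (simp add: v_def)
  obtain l r where l: "l \<in> sphere 0 1" "strict_mono r" "(v \<circ> r) \<longlonglongrightarrow> l"
    using seq_compactE[OF compact_imp_seq_compact[OF compact_sphere] vs] by blast
  have xz: "x \<longlonglongrightarrow> z"
  proof -
    have "(\<lambda>n. x n - z) \<longlonglongrightarrow> 0"
    proof (rule Lim_null_comparison)
      show "\<forall>\<^sub>F n in sequentially. norm (x n - z) \<le> inverse (real (Suc n))"
      proof (rule always_eventually, rule allI)
        fix n have "dist z (x n) < 1/(real n + 1)" by (rule x(3))
        thus "norm (x n - z) \<le> inverse (real (Suc n))"
          by (simp add: dist_norm norm_minus_commute divide_inverse add.commute)
      qed
      show "(\<lambda>n. inverse (real (Suc n))) \<longlonglongrightarrow> 0" by (rule LIMSEQ_inverse_real_of_nat)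
    qed
    thus ?thesis by (rule LIM_zero_cancel)
  qed
  hence xrz: "(x \<circ> r) \<longlonglongrightarrow> z" using LIMSEQ_subseq_LIMSEQ l(2) by blast
  have G'lim: "(\<lambda>n. G' ((x \<circ> r) n)) \<longlonglongrightarrow> G' z"
    by (rule continuous_on_tendsto_compose[OF G'(2) xrz W(2)]) (simp add: xUW)
  have \<phi>'lim: "(\<lambda>n. \<phi>' ((x \<circ> r) n)) \<longlonglongrightarrow> \<phi>' z"
    by (rule continuous_on_tendsto_compose[OF \<phi>'(2) xrz ch(2)]) (simp add: xUW)
  have L1: "(\<lambda>n. blinfun_apply (G' ((x \<circ> r) n)) ((v \<circ> r) n)) \<longlonglongrightarrow> blinfun_apply (G' z) l"
    by (rule blinfun.tendsto[OF G'lim l(3)])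
  have L2: "(\<lambda>n. blinfun_apply (\<phi>' ((x \<circ> r) n)) ((v \<circ> r) n)) \<longlonglongrightarrow> blinfun_apply (\<phi>' z) l"
    by (rule blinfun.tendsto[OF \<phi>'lim l(3)])
  have vel: "vector_derivative (g \<circ> \<gamma> n) (at 0) = blinfun_apply (G' (x n)) (v n)" for n
    unfolding v_def
    by (rule comp_velocity[OF \<gamma>(1) W(1) xUW(2)]) (use G' xUW W(4) in auto)
  have "norm (blinfun_apply (G' z) l) \<le> c1"
  proof (rule LIMSEQ_le_const2[OF tendsto_norm[OF L1]])
    show "\<exists>N. \<forall>n\<ge>N. norm (blinfun_apply (G' ((x \<circ> r) n)) ((v \<circ> r) n)) \<le> c1"
      using \<gamma>(3) vel by (auto intro!: less_imp_le)
  qed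
  have inS: "blinfun_apply (\<phi>' z) l \<in> S"
  proof (rule Lim_in_closed_set[OF closed_subspace[OF S(1)] _ _ L2])
    show "sequentially \<noteq> bot" by simp
    show "\<forall>\<^sub>F n in sequentially. blinfun_apply (\<phi>' ((x \<circ> r) n)) ((v \<circ> r) n) \<in> S"
    proof (rule always_eventually, rule allI)
      fix n
      show "blinfun_apply (\<phi>' ((x \<circ> r) n)) ((v \<circ> r) n) \<in> S"
        unfolding v_def comp_apply
        by (rule velocity_in_S[OF \<gamma>(1) ch(1) xUW(1)]) (use \<phi>' xUW ch(9) S in auto)
    qed
  qed
  have phz: "\<phi> z \<in> V" using ch by auto
  have inv: "blinfun_apply (\<psi>' (\<phi> z)) (blinfun_apply (\<phi>' z) l) = l"
    by (rule chart_inv_deriv[of U z \<psi> \<phi>, OF ch(1,2,5)]) (use \<phi>' \<psi>' phz ch in auto)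
  obtain \<gamma>0 where \<gamma>0: "curve_through M z \<gamma>0" "vector_derivative \<gamma>0 (at 0) = l"
    using make_curve[OF ch(3,4,5) \<psi>'(1) \<psi>'(2) ch(9) S(1) z ch(2) inS] unfolding inv by blast
  have "vector_derivative (g \<circ> \<gamma>0) (at 0) = blinfun_apply (G' z) (vector_derivative \<gamma>0 (at 0))"
    by (rule comp_velocity[OF \<gamma>0(1) W(1,2) G'(1)[rule_format, OF W(2)] W(4)])
  hence vz: "vector_derivative (g \<circ> \<gamma>0) (at 0) = blinfun_apply (G' z) l" unfolding \<gamma>0(2) .
  have nl: "norm (vector_derivative \<gamma>0 (at 0)) = 1" using \<gamma>0(2) l(1) by simp
  have "norm (blinfun_apply (G' z) l) \<in> Q z" unfolding Q_def
    by (rule CollectI, rule exI[of _ \<gamma>0]) (simp only: vz nl \<gamma>0(1) simp_thms)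
  hence "Inf (Q z) \<le> norm (blinfun_apply (G' z) l)"
    by (rule cInf_lower) (unfold Q_def, rule conorm_facts(2)[OF sub d z])
  hence "conorm M g z \<le> norm (blinfun_apply (G' z) l)" unfolding cQ .
  thus False using \<open>norm (blinfun_apply (G' z) l) \<le> c1\<close> c1 by linarith
qed



theorem lemma3p2:
  fixes M :: "'a::euclidean_space set" and \<Gamma> :: "('a \<Rightarrow> 'a) set" and d :: nat
  assumes "compact M" and "C1_submanifold d M" and "d \<ge> 1"
    and "semigroup_of_C1_diffeos M \<Gamma>"
  shows "expanding M \<Gamma> \<longleftrightarrow>
    (\<exists>(k::nat) (h::nat \<Rightarrow> 'a \<Rightarrow> 'a) (c::nat \<Rightarrow> 'a) (r::nat \<Rightarrow> real) (\<kappa>::real).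
       \<kappa> > 1 \<and> (\<forall>i<k. h i \<in> \<Gamma> \<and> c i \<in> M \<and> r i > 0) \<and>
       M = (\<Union>i<k. M \<inter> ball (c i) (r i)) \<and>
       (\<forall>i<k. \<forall>x \<in> M \<inter> ball (c i) (r i). conorm M (inv_into M (h i)) x > \<kappa>))"
proof
  assume exp: "expanding M \<Gamma>"
  have "\<forall>z\<in>M. \<exists>g. \<exists>\<rho>. \<exists>\<kappa>. g \<in> \<Gamma> \<and> \<rho> > 0 \<and> \<kappa> > 1 \<and>
          (\<forall>x\<in>M \<inter> ball z \<rho>. conorm M (inv_into M g) x > \<kappa>)"
  proof
    fix z assume z: "z \<in> M"
    then obtain g where g: "g \<in> \<Gamma>" "conorm M (inv_into M g) z > 1"
      using exp unfolding expanding_def by blast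
    have C1: "C1_map M (inv_into M g)"
      using assms(4) g(1) unfolding semigroup_of_C1_diffeos_def C1_diffeo_def by blast
    define \<kappa> where "\<kappa> = (1 + conorm M (inv_into M g) z) / 2"
    have \<kappa>: "\<kappa> > 1" "\<kappa> < conorm M (inv_into M g) z" using g(2) by (auto simp: \<kappa>_def)
    obtain \<rho> where "\<rho> > 0" "\<forall>x\<in>M \<inter> ball z \<rho>. conorm M (inv_into M g) x > \<kappa>"
      using conorm_lsc[OF assms(2,3) C1 z \<kappa>(2)] by blast
    thus "\<exists>g. \<exists>\<rho>. \<exists>\<kappa>. g \<in> \<Gamma> \<and> \<rho> > 0 \<and> \<kappa> > 1 \<and>
          (\<forall>x\<in>M \<inter> ball z \<rho>. conorm M (inv_into M g) x > \<kappa>)" using g(1) \<kappa>(1) by blast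
  qed
  then obtain gf rf kf where F: "\<And>z. z \<in> M \<Longrightarrow> gf z \<in> \<Gamma> \<and> rf z > 0 \<and> kf z > 1 \<and>
          (\<forall>x\<in>M \<inter> ball z (rf z). conorm M (inv_into M (gf z)) x > kf z)"
    by metis
  have cov: "M \<subseteq> (\<Union>z\<in>M. ball z (rf z))" using F by fastforce
  obtain D where D: "D \<subseteq> M" "finite D" "M \<subseteq> (\<Union>z\<in>D. ball z (rf z))"
    using compactE_image[OF assms(1) _ cov] by blast
  obtain xs where xs: "set xs = D" using finite_list[OF D(2)] by blast
  define \<kappa> where "\<kappa> = Min (insert 2 (kf ` D))"
  have fin: "finite (insert 2 (kf ` D))" using D(2) by simp
  have \<kappa>1: "\<kappa> > 1" unfolding \<kappa>_def using fin F D(1) by (subst Min_gr_iff) auto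
  have \<kappa>le: "\<kappa> \<le> kf z" if "z \<in> D" for z unfolding \<kappa>_def using fin that by (intro Min_le) auto
  show "\<exists>(k::nat) (h::nat \<Rightarrow> 'a \<Rightarrow> 'a) (c::nat \<Rightarrow> 'a) (r::nat \<Rightarrow> real) (\<kappa>::real).
       \<kappa> > 1 \<and> (\<forall>i<k. h i \<in> \<Gamma> \<and> c i \<in> M \<and> r i > 0) \<and>
       M = (\<Union>i<k. M \<inter> ball (c i) (r i)) \<and>
       (\<forall>i<k. \<forall>x \<in> M \<inter> ball (c i) (r i). conorm M (inv_into M (h i)) x > \<kappa>)"
  proof (intro exI conjI)
    show "\<kappa> > 1" by (rule \<kappa>1)
    have mem: "xs ! i \<in> D" if "i < length xs" for i using xs that nth_mem by blast
    show "\<forall>i<length xs. gf (xs ! i) \<in> \<Gamma> \<and> xs ! i \<in> M \<and> rf (xs ! i) > 0"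
      using mem F D(1) by blast
    show "M = (\<Union>i<length xs. M \<inter> ball (xs ! i) (rf (xs ! i)))"
    proof
      show "M \<subseteq> (\<Union>i<length xs. M \<inter> ball (xs ! i) (rf (xs ! i)))"
      proof
        fix x assume x: "x \<in> M"
        then obtain z where z: "z \<in> D" "x \<in> ball z (rf z)" using D(3) by blast
        then obtain i where "i < length xs" "xs ! i = z" using xs by (metis in_set_conv_nth)
        thus "x \<in> (\<Union>i<length xs. M \<inter> ball (xs ! i) (rf (xs ! i)))" using x z by blast
      qed
    qed blast
    show "\<forall>i<length xs. \<forall>x\<in>M \<inter> ball (xs ! i) (rf (xs ! i)).
            \<kappa> < conorm M (inv_into M (gf (xs ! i))) x"
    proof (intro allI impI ballI)
      fix i x assume i: "i < length xs" and x: "x \<in> M \<inter> ball (xs ! i) (rf (xs ! i))"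
      have m: "xs ! i \<in> D" by (rule mem[OF i])
      hence "kf (xs ! i) < conorm M (inv_into M (gf (xs ! i))) x"
        using F[of "xs ! i"] D(1) x by blast
      thus "\<kappa> < conorm M (inv_into M (gf (xs ! i))) x"
        using \<kappa>le[OF m] by linarith
    qed
  qed
next
  assume "\<exists>(k::nat) (h::nat \<Rightarrow> 'a \<Rightarrow> 'a) (c::nat \<Rightarrow> 'a) (r::nat \<Rightarrow> real) (\<kappa>::real).
       \<kappa> > 1 \<and> (\<forall>i<k. h i \<in> \<Gamma> \<and> c i \<in> M \<and> r i > 0) \<and>
       M = (\<Union>i<k. M \<inter> ball (c i) (r i)) \<and>
       (\<forall>i<k. \<forall>x \<in> M \<inter> ball (c i) (r i). conorm M (inv_into M (h i)) x > \<kappa>)"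
  then obtain k :: nat and h c r \<kappa> where H: "\<kappa> > 1 \<and> (\<forall>i<k. h i \<in> \<Gamma> \<and> c i \<in> M \<and> r i > 0) \<and>
       M = (\<Union>i<k. M \<inter> ball (c i) (r i)) \<and>
       (\<forall>i<k. \<forall>x \<in> M \<inter> ball (c i) (r i). conorm M (inv_into M (h i)) x > \<kappa>)"
    by (elim exE) (rule that, assumption)
  note H1 = conjunct1[OF H] and H2 = conjunct1[OF conjunct2[OF H]]
    and H3 = conjunct1[OF conjunct2[OF conjunct2[OF H]]]
    and H4 = conjunct2[OF conjunct2[OF conjunct2[OF H]]]
  note H = H1 H2 H3 H4
  show "expanding M \<Gamma>" unfolding expanding_def
  proof
    fix z assume z: "z \<in> M"
    then obtain i where i: "i < k" "z \<in> M \<inter> ball (c i) (r i)" using H(3) by blast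
    hence "conorm M (inv_into M (h i)) z > \<kappa>" using H(4) by blast
    hence "conorm M (inv_into M (h i)) z > 1" using H(1) by linarith
    thus "\<exists>g\<in>\<Gamma>. 1 < conorm M (inv_into M g) z" using H(2) i(1) by blast
  qed
qed


end
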